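(* Let $n\ge 1$, let $S=\{s_1,\dots,s_{n-1}\}$ with $s_i=(i,i+1)$ be the simple reflections of $S_n$, let $I_n=\{\pi\in S_n : \pi^2=\mathrm{id}\}$, and let $V_n$ be the $\mathbb{Q}$-vector space with basis $\{C_w : w\in I_n\}$. Define $\rho:S\to GL(V_n)$ by $\rho(s)C_w=\mathrm{sign}(s;w)\,C_{sws}$ for $s\in S$, $w\in I_n$, where $\mathrm{sign}(s;w)=-1$ if $sws=w$ and $s\in\mathrm{Des}(w)$, and $\mathrm{sign}(s;w)=1$ otherwise. Then $\rho$ extends (uniquely) to a group homomorphism $S_n\to GL(V_n)$, i.e. it determines a representation of $S_n$.
   Context: $\ell(\pi)$ is the Coxeter length of $\pi\in S_n$ with respect to $S$ (the number of inversions), and the descent set is $\mathrm{Des}(\pi)=\{s\in S:\ell(\pi s)<\ell(\pi)\}$; equivalently $s_i\in\mathrm{Des}(\pi)$ iff $\pi(i)>\pi(i+1)$. *)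

theory Defs
  imports Complex_Main "HOL-Algebra.Sym_Groups"
begin

text \<open>Permutations of {1..n} as in HOL-Algebra's sym_group. The simple reflection
  s_i is the transposition (i, i+1), 1 \<le> i \<le> n-1.\<close>

definition simple_refl :: "nat \<Rightarrow> (nat \<Rightarrow> nat)" where
  "simple_refl i = Transposition.transpose i (Suc i)"

definition coxeter_length :: "nat \<Rightarrow> (nat \<Rightarrow> nat) \<Rightarrow> nat" where
  "coxeter_length n p = card {(i, j). 1 \<le> i \<and> i < j \<and> j \<le> n \<and> p i > p j}"

definition is_descent :: "nat \<Rightarrow> nat \<Rightarrow> (nat \<Rightarrow> nat) \<Rightarrow> bool" where
  "is_descent n i p \<longleftrightarrow> coxeter_length n (p \<circ> simple_refl i) < coxeter_length n p"

definition involutions :: "nat \<Rightarrow> (nat \<Rightarrow> nat) set" where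
  "involutions n = {w. w permutes {1..n} \<and> w \<circ> w = id}"

text \<open>V_n: the Q-vector space with basis {C_w : w \<in> I_n}, represented by coefficient
  functions supported on I_n.\<close>
definition Vn :: "nat \<Rightarrow> ((nat \<Rightarrow> nat) \<Rightarrow> rat) set" where
  "Vn n = {f. \<forall>w. w \<notin> involutions n \<longrightarrow> f w = 0}"

definition sign_sw :: "nat \<Rightarrow> nat \<Rightarrow> (nat \<Rightarrow> nat) \<Rightarrow> rat" where
  "sign_sw n i w =
     (if simple_refl i \<circ> w \<circ> simple_refl i = w \<and> is_descent n i w then -1 else 1)"

text \<open>rho(s_i) C_w = sign(s_i;w) C_{s_i w s_i}, extended linearly: the coefficient of
  C_u in rho(s_i) f is sign(s_i; s_i u s_i) * f(s_i u s_i).\<close>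
definition rho :: "nat \<Rightarrow> nat \<Rightarrow> ((nat \<Rightarrow> nat) \<Rightarrow> rat) \<Rightarrow> ((nat \<Rightarrow> nat) \<Rightarrow> rat)" where
  "rho n i f = (\<lambda>u. if u \<in> involutions n then
      (let w = simple_refl i \<circ> u \<circ> simple_refl i in sign_sw n i w * f w) else 0)"

definition linear_on_Vn :: "nat \<Rightarrow> (((nat \<Rightarrow> nat) \<Rightarrow> rat) \<Rightarrow> ((nat \<Rightarrow> nat) \<Rightarrow> rat)) \<Rightarrow> bool" where
  "linear_on_Vn n A \<longleftrightarrow> (\<forall>f\<in>Vn n. \<forall>g\<in>Vn n. \<forall>a b :: rat.
      A (\<lambda>w. a * f w + b * g w) = (\<lambda>w. a * A f w + b * A g w))"

definition GLV :: "nat \<Rightarrow> (((nat \<Rightarrow> nat) \<Rightarrow> rat) \<Rightarrow> ((nat \<Rightarrow> nat) \<Rightarrow> rat)) monoid" where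
  "GLV n = \<lparr> carrier = {A. A \<in> extensional (Vn n) \<and> bij_betw A (Vn n) (Vn n) \<and> linear_on_Vn n A},
             mult = (\<lambda>A B. restrict (A \<circ> B) (Vn n)),
             one = restrict id (Vn n) \<rparr>"

end

theory Submission
  imports Defs
begin


lemma sr_apply: "simple_refl i x = (if x = i then Suc i else if x = Suc i then i else x)"
  by (simp add: simple_refl_def Transposition.transpose_def)

lemma sr_invol [simp]: "simple_refl i (simple_refl i x) = x"
  by (simp add: sr_apply)

lemma sr_comp [simp]: "simple_refl i \<circ> simple_refl i = id"
  by (auto simp: fun_eq_iff)

lemma sr_order: "a < b \<Longrightarrow> (a, b) \<noteq> (i, Suc i) \<Longrightarrow> simple_refl i a < simple_refl i b"
  by (auto simp: sr_apply)

lemma sr_range: "1 \<le> i \<Longrightarrow> i < n \<Longrightarrow> simple_refl i x \<in> {1..n} \<longleftrightarrow> x \<in> {1..n}"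
  by (auto simp: sr_apply)

lemma sr_permutes: "1 \<le> i \<Longrightarrow> i < n \<Longrightarrow> simple_refl i permutes {1..n}"
  unfolding simple_refl_def by (rule permutes_swap_id) auto

definition invset :: "nat \<Rightarrow> (nat \<Rightarrow> nat) \<Rightarrow> (nat \<times> nat) set" where
  "invset n p = {(i, j). 1 \<le> i \<and> i < j \<and> j \<le> n \<and> p i > p j}"

lemma invset_finite: "finite (invset n p)"
  by (rule finite_subset[of _ "{1..n} \<times> {1..n}"]) (auto simp: invset_def)

lemma invset_swap:
  assumes "1 \<le> i" "i < n"
  shows "card (invset n (p \<circ> simple_refl i) - {(i, Suc i)}) = card (invset n p - {(i, Suc i)})"
proof -
  let ?s = "simple_refl i"
  let ?f = "\<lambda>(a, b). (?s a, ?s b)"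
  have inj: "inj ?f" by (auto simp: inj_def) (metis sr_invol)+
  have "?f ` (invset n (p \<circ> ?s) - {(i, Suc i)}) = invset n p - {(i, Suc i)}"
  proof
    show "?f ` (invset n (p \<circ> ?s) - {(i, Suc i)}) \<subseteq> invset n p - {(i, Suc i)}"
    proof
      fix x assume "x \<in> ?f ` (invset n (p \<circ> ?s) - {(i, Suc i)})"
      then obtain a b where ab: "(a,b) \<in> invset n (p \<circ> ?s)" "(a,b) \<noteq> (i, Suc i)" "x = (?s a, ?s b)" by auto
      then show "x \<in> invset n p - {(i, Suc i)}"
        using assms sr_order[of a b i] by (auto simp: invset_def sr_apply split: if_splits)
    qed
  next
    show "invset n p - {(i, Suc i)} \<subseteq> ?f ` (invset n (p \<circ> ?s) - {(i, Suc i)})"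
    proof
      fix x assume x: "x \<in> invset n p - {(i, Suc i)}"
      then obtain a b where ab: "x = (a, b)" by (cases x)
      have "(?s a, ?s b) \<in> invset n (p \<circ> ?s) - {(i, Suc i)}"
        using x ab assms sr_order[of a b i] by (auto simp: invset_def sr_apply split: if_splits)
      moreover have "x = ?f (?s a, ?s b)" using ab by simp
      ultimately show "x \<in> ?f ` (invset n (p \<circ> ?s) - {(i, Suc i)})" by blast
    qed
  qed
  then show ?thesis using card_image[OF inj_on_subset[OF inj subset_UNIV]] by metis
qed

lemma descent_iff:
  assumes "1 \<le> i" "i < n" "inj p"
  shows "is_descent n i p \<longleftrightarrow> p (Suc i) < p i"
proof -
  let ?s = "simple_refl i"
  have cl: "coxeter_length n q = card (invset n q)" for q
    by (simp add: coxeter_length_def invset_def)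
  have ne: "p i \<noteq> p (Suc i)" using assms(3) by (auto dest: injD)
  have e: "card (invset n (p \<circ> ?s) - {(i, Suc i)}) = card (invset n p - {(i, Suc i)})"
    by (rule invset_swap[OF assms(1,2)])
  show ?thesis
  proof (cases "p (Suc i) < p i")
    case True
    have "(i, Suc i) \<in> invset n p" using True assms by (auto simp: invset_def)
    moreover have "(i, Suc i) \<notin> invset n (p \<circ> ?s)" using True by (auto simp: invset_def sr_apply)
    moreover have "card (invset n p) > 0" using \<open>(i, Suc i) \<in> invset n p\<close> invset_finite card_gt_0_iff by blast
    ultimately have "card (invset n (p \<circ> ?s)) < card (invset n p)"
      using e invset_finite by (simp add: card_Diff_singleton)
    then show ?thesis using True by (simp add: is_descent_def cl)
  next
    case False
    then have lt: "p i < p (Suc i)" using ne by simp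
    have "(i, Suc i) \<notin> invset n p" using lt by (auto simp: invset_def)
    moreover have "(i, Suc i) \<in> invset n (p \<circ> ?s)" using lt assms by (auto simp: invset_def sr_apply)
    ultimately have "card (invset n (p \<circ> ?s)) = card (invset n p) + 1"
      using e invset_finite by (simp add: card_Diff_singleton) (metis Suc_pred card_gt_0_iff empty_iff)
    then show ?thesis using False by (simp add: is_descent_def cl)
  qed
qed



definition sg :: "nat \<Rightarrow> nat \<Rightarrow> rat" where
  "sg x y = (if x < y then 1 else -1)"

definition psign :: "nat \<Rightarrow> (nat \<Rightarrow> nat) \<Rightarrow> (nat \<Rightarrow> nat) \<Rightarrow> rat" where
  "psign n p w = (\<Prod>i \<in> {i \<in> {1..n}. i < w i}. sg (p i) (p (w i)))"

lemma sg_swap: "x \<noteq> y \<Longrightarrow> sg y x = - sg x y"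
  by (auto simp: sg_def)

lemma invol_apply: "w \<in> involutions n \<Longrightarrow> w (w x) = x"
  by (auto simp: involutions_def fun_eq_iff dest: fun_cong[of _ _ x])

lemma invol_perm: "w \<in> involutions n \<Longrightarrow> w permutes {1..n}"
  by (simp add: involutions_def)

lemma psign_sq: "psign n q w * psign n q w = 1"
proof -
  have "psign n q w * psign n q w = (\<Prod>i \<in> {i \<in> {1..n}. i < w i}. sg (q i) (q (w i)) * sg (q i) (q (w i)))"
    unfolding psign_def by (rule prod.distrib[symmetric])
  also have "\<dots> = 1" by (rule prod.neutral) (simp add: sg_def)
  finally show ?thesis .
qed

lemma cocycle:
  assumes p: "p permutes {1..n}" and q: "q permutes {1..n}" and w: "w \<in> involutions n"
  shows "psign n (p \<circ> q) w = psign n p (q \<circ> w \<circ> inv' q) * psign n q w"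
proof -
  let ?A = "{i \<in> {1..n}. i < w i}"
  let ?B = "{i \<in> {1..n}. q i < q (w i)}"
  let ?h = "\<lambda>i. sg (p (q i)) (p (q (w i)))"
  have wp: "w permutes {1..n}" using w by (rule invol_perm)
  have ww: "\<And>x. w (w x) = x" using w by (rule invol_apply)
  have qinj: "inj q" using q by (rule permutes_inj)
  have qr: "\<And>x. 1 \<le> q x \<and> q x \<le> n \<longleftrightarrow> 1 \<le> x \<and> x \<le> n"
    using permutes_in_image[OF q] by simp
  have wr: "\<And>x. 1 \<le> w x \<and> w x \<le> n \<longleftrightarrow> 1 \<le> x \<and> x \<le> n"
    using permutes_in_image[OF wp] by simp
  have pinj: "inj p" using p by (rule permutes_inj)
  have qi: "\<And>x. inv' q (q x) = x" "\<And>x. q (inv' q x) = x" using q by (simp_all add: permutes_inverses)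
  have "psign n p (q \<circ> w \<circ> inv' q) = (\<Prod>a \<in> {a \<in> {1..n}. a < q (w (inv' q a))}. sg (p a) (p (q (w (inv' q a)))))"
    by (simp add: psign_def)
  also have "\<dots> = (\<Prod>a \<in> q ` ?B. sg (p a) (p (q (w (inv' q a)))))"
  proof -
    have "{a \<in> {1..n}. a < q (w (inv' q a))} = q ` ?B"
    proof
      show "{a \<in> {1..n}. a < q (w (inv' q a))} \<subseteq> q ` ?B"
      proof
        fix a assume a: "a \<in> {a \<in> {1..n}. a < q (w (inv' q a))}"
        have "inv' q a \<in> {1..n}" using a permutes_in_image[OF permutes_inv[OF q], of a] by auto
        then have "inv' q a \<in> ?B" using a qi by simp
        then show "a \<in> q ` ?B" using qi by (metis image_eqI)
      qed
    next
      show "q ` ?B \<subseteq> {a \<in> {1..n}. a < q (w (inv' q a))}"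
        using qr qi by auto
    qed
    then show ?thesis by simp
  qed
  also have "\<dots> = prod ?h ?B"
    by (subst prod.reindex[OF inj_on_subset[OF qinj subset_UNIV]]) (simp add: qi)
  also have "\<dots> = (\<Prod>i \<in> ?A. ?h i * sg (q i) (q (w i)))"
  proof -
    define \<tau> where "\<tau> i = (if q i < q (w i) then i else w i)" for i
    have bij: "bij_betw \<tau> ?A ?B"
    proof (rule bij_betw_imageI)
      show "inj_on \<tau> ?A"
      proof (rule inj_onI)
        fix x y assume x: "x \<in> ?A" and y: "y \<in> ?A" and e: "\<tau> x = \<tau> y"
        show "x = y"
        proof (cases "q x < q (w x)"; cases "q y < q (w y)")
          assume "q x < q (w x)" "q y < q (w y)" then show ?thesis using e by (simp add: \<tau>_def)
        next
          assume "q x < q (w x)" "\<not> q y < q (w y)"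
          then have "x = w y" using e by (simp add: \<tau>_def)
          then show ?thesis using x y ww[of y] by simp
        next
          assume "\<not> q x < q (w x)" "q y < q (w y)"
          then have "w x = y" using e by (simp add: \<tau>_def)
          then show ?thesis using x y ww[of x] by simp
        next
          assume "\<not> q x < q (w x)" "\<not> q y < q (w y)"
          then have "w x = w y" using e by (simp add: \<tau>_def)
          then show ?thesis using ww[of x] ww[of y] by metis
        qed
      qed
      show "\<tau> ` ?A = ?B"
      proof
        show "\<tau> ` ?A \<subseteq> ?B"
        proof
          fix x assume "x \<in> \<tau> ` ?A"
          then obtain i where i: "i \<in> ?A" "x = \<tau> i" by blast
          have ne: "q i \<noteq> q (w i)" using i injD[OF qinj, of i "w i"] by auto
          have wi: "1 \<le> w i \<and> w i \<le> n" using i wr[of i] by auto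
          show "x \<in> ?B"
          proof (cases "q i < q (w i)")
            case True then show ?thesis using i by (simp add: \<tau>_def)
          next
            case False
            then have "q (w i) < q (w (w i))" using ne ww[of i] by simp
            then show ?thesis using i wi False by (simp add: \<tau>_def)
          qed
        qed
        show "?B \<subseteq> \<tau> ` ?A"
        proof
          fix b assume b: "b \<in> ?B"
          have wb: "w b \<noteq> b" using b by auto
          show "b \<in> \<tau> ` ?A"
          proof (cases "b < w b")
            case True
            then have "\<tau> b = b" "b \<in> ?A" using b by (simp_all add: \<tau>_def)
            then show ?thesis by (metis image_eqI)
          next
            case False
            then have "w b < w (w b)" using wb ww[of b] by simp
            moreover have "1 \<le> w b \<and> w b \<le> n" using b wr[of b] by auto
            ultimately have "w b \<in> ?A" by simp
            moreover have "\<tau> (w b) = b" using b ww[of b] by (simp add: \<tau>_def)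
            ultimately show ?thesis by (metis image_eqI)
          qed
        qed
      qed
    qed
    have "prod ?h ?B = (\<Prod>i \<in> ?A. ?h (\<tau> i))"
      using prod.reindex_bij_betw[OF bij, of ?h] by simp
    also have "\<dots> = (\<Prod>i \<in> ?A. ?h i * sg (q i) (q (w i)))"
    proof (rule prod.cong[OF refl])
      fix i assume i: "i \<in> ?A"
      have ne: "q i \<noteq> q (w i)" using i injD[OF qinj, of i "w i"] by auto
      have ne2: "p (q i) \<noteq> p (q (w i))" using ne injD[OF pinj, of "q i" "q (w i)"] by auto
      show "?h (\<tau> i) = ?h i * sg (q i) (q (w i))"
      proof (cases "q i < q (w i)")
        case True then show ?thesis by (simp add: \<tau>_def sg_def)
      next
        case False
        then show ?thesis using ne ne2 ww[of i] by (simp add: \<tau>_def sg_def)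
      qed
    qed
    finally show ?thesis .
  qed
  also have "\<dots> = psign n (p \<circ> q) w * psign n q w"
    by (simp add: psign_def prod.distrib)
  finally have "psign n p (q \<circ> w \<circ> inv' q) * psign n q w = psign n (p \<circ> q) w * (psign n q w * psign n q w)"
    by (simp only: mult.assoc)
  then show ?thesis by (simp only: psign_sq mult_1_right)
qed



definition Phi :: "nat \<Rightarrow> (nat \<Rightarrow> nat) \<Rightarrow> ((nat \<Rightarrow> nat) \<Rightarrow> rat) \<Rightarrow> ((nat \<Rightarrow> nat) \<Rightarrow> rat)" where
  "Phi n p = restrict (\<lambda>f u. if u \<in> involutions n then
      psign n p (inv' p \<circ> u \<circ> p) * f (inv' p \<circ> u \<circ> p) else 0) (Vn n)"

lemma conj_invol:
  assumes p: "p permutes {1..n}" and u: "u \<in> involutions n"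
  shows "inv' p \<circ> u \<circ> p \<in> involutions n"
proof -
  have up: "u permutes {1..n}" and uu: "u \<circ> u = id" using u by (auto simp: involutions_def)
  have "inv' p \<circ> u \<circ> p permutes {1..n}"
    by (intro permutes_compose p up permutes_inv)
  moreover have "(inv' p \<circ> u \<circ> p) \<circ> (inv' p \<circ> u \<circ> p) = id"
  proof -
    have "(inv' p \<circ> u \<circ> p) \<circ> (inv' p \<circ> u \<circ> p) = inv' p \<circ> u \<circ> (p \<circ> inv' p) \<circ> u \<circ> p"
      by (simp add: comp_assoc)
    also have "\<dots> = inv' p \<circ> (u \<circ> u) \<circ> p" by (simp add: permutes_inv_o[OF p] comp_assoc)
    also have "\<dots> = id" by (simp add: uu permutes_inv_o[OF p])
    finally show ?thesis .
  qed
  ultimately show ?thesis by (simp add: involutions_def)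
qed

lemma Phi_Vn: "f \<in> Vn n \<Longrightarrow> Phi n p f \<in> Vn n"
  by (auto simp: Phi_def Vn_def)

lemma Phi_apply: "f \<in> Vn n \<Longrightarrow> Phi n p f = (\<lambda>u. if u \<in> involutions n then
      psign n p (inv' p \<circ> u \<circ> p) * f (inv' p \<circ> u \<circ> p) else 0)"
  by (simp add: Phi_def)

lemma Phi_comp:
  assumes p: "p permutes {1..n}" and q: "q permutes {1..n}" and f: "f \<in> Vn n"
  shows "Phi n (p \<circ> q) f = Phi n p (Phi n q f)"
proof
  fix u
  have qf: "Phi n q f \<in> Vn n" using f by (rule Phi_Vn)
  show "Phi n (p \<circ> q) f u = Phi n p (Phi n q f) u"
  proof (cases "u \<in> involutions n")
    case False then show ?thesis using f unfolding Phi_apply[OF qf] by (simp add: Phi_apply[OF f])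
  next
    case True
    define w1 where "w1 = inv' p \<circ> u \<circ> p"
    define W where "W = inv' q \<circ> w1 \<circ> q"
    have w1I: "w1 \<in> involutions n" unfolding w1_def by (rule conj_invol[OF p True])
    have WI: "W \<in> involutions n" unfolding W_def by (rule conj_invol[OF q w1I])
    have inv: "inv' (p \<circ> q) = inv' q \<circ> inv' p"
      by (rule o_inv_distrib) (use p q permutes_bij in auto)
    have W': "inv' (p \<circ> q) \<circ> u \<circ> (p \<circ> q) = W"
      by (simp add: inv W_def w1_def comp_assoc)
    have qWq: "q \<circ> W \<circ> inv' q = w1"
      by (simp add: W_def comp_assoc permutes_inv_o[OF q]) (simp add: comp_assoc[symmetric] permutes_inv_o[OF q])
    have "Phi n (p \<circ> q) f u = psign n (p \<circ> q) W * f W"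
      using True f by (simp add: Phi_apply W')
    also have "\<dots> = psign n p w1 * (psign n q W * f W)"
      using cocycle[OF p q WI] qWq by simp
    also have "\<dots> = Phi n p (Phi n q f) u"
      using True f w1I unfolding Phi_apply[OF qf] by (simp add: Phi_apply[OF f] w1_def W_def)
    finally show ?thesis .
  qed
qed

lemma psign_id: "psign n id w = 1"
  by (simp add: psign_def sg_def)

lemma Phi_id: "f \<in> Vn n \<Longrightarrow> Phi n id f = f"
  by (rule ext) (auto simp: Phi_apply psign_id Vn_def)



lemma psign_sr:
  assumes w: "w \<in> involutions n" and i: "1 \<le> i" "i < n"
  shows "psign n (simple_refl i) w = (if w i = Suc i then -1 else 1)"
proof -
  let ?s = "simple_refl i"
  let ?A = "{j \<in> {1..n}. j < w j}"
  have one: "sg (?s j) (?s (w j)) = 1" if "j \<in> ?A" "\<not> (j = i \<and> w j = Suc i)" for j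
    using sr_order[of j "w j" i] that by (auto simp: sg_def)
  show ?thesis
  proof (cases "w i = Suc i")
    case True
    have iA: "i \<in> ?A" using True i by simp
    have "psign n ?s w = sg (?s i) (?s (w i)) * (\<Prod>j \<in> ?A - {i}. sg (?s j) (?s (w j)))"
      unfolding psign_def by (rule prod.remove[OF _ iA]) simp
    also have "(\<Prod>j \<in> ?A - {i}. sg (?s j) (?s (w j))) = 1"
      by (rule prod.neutral) (use one in auto)
    also have "sg (?s i) (?s (w i)) = -1" using True by (simp add: sr_apply sg_def)
    finally show ?thesis using True by simp
  next
    case False
    have "psign n ?s w = 1"
      unfolding psign_def by (rule prod.neutral) (use one False in auto)
    then show ?thesis using False by simp
  qed
qed

lemma sign_sw_eq:
  assumes w: "w \<in> involutions n" and i: "1 \<le> i" "i < n"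
  shows "sign_sw n i w = (if w i = Suc i then -1 else 1)"
proof -
  let ?s = "simple_refl i"
  have ww: "\<And>x. w (w x) = x" using w by (rule invol_apply)
  have winj: "inj w" using invol_perm[OF w] by (rule permutes_inj)
  have d: "is_descent n i w \<longleftrightarrow> w (Suc i) < w i" by (rule descent_iff[OF i winj])
  have "(?s \<circ> w \<circ> ?s = w \<and> w (Suc i) < w i) \<longleftrightarrow> w i = Suc i"
  proof
    assume a: "?s \<circ> w \<circ> ?s = w \<and> w (Suc i) < w i"
    have e1: "?s (w (Suc i)) = w i" using fun_cong[OF conjunct1[OF a], of i] by (simp add: sr_apply)
    have e2: "?s (w i) = w (Suc i)" using fun_cong[OF conjunct1[OF a], of "Suc i"] by (simp add: sr_apply)
    show "w i = Suc i"
    proof (rule ccontr)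
      assume ne: "w i \<noteq> Suc i"
      show False
      proof (cases "w i = i")
        case True then show False using e2 a by (simp add: sr_apply)
      next
        case False then have "?s (w i) = w i" using ne by (simp add: sr_apply)
        then show False using e2 a by simp
      qed
    qed
  next
    assume a: "w i = Suc i"
    have b: "w (Suc i) = i" using ww[of i] a by simp
    have "?s \<circ> w \<circ> ?s = w"
    proof
      fix x
      show "(?s \<circ> w \<circ> ?s) x = w x"
      proof (cases "x = i \<or> x = Suc i")
        case True then show ?thesis using a b by (auto simp: sr_apply)
      next
        case False
        have "w x \<noteq> i" using False ww[of x] a by metis
        moreover have "w x \<noteq> Suc i" using False ww[of x] b by metis
        ultimately show ?thesis using False by (simp add: sr_apply)
      qed
    qed
    then show "?s \<circ> w \<circ> ?s = w \<and> w (Suc i) < w i" using a b by simp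
  qed
  then show ?thesis by (simp add: sign_sw_def d)
qed

lemma Phi_sr:
  assumes i: "1 \<le> i" "i < n"
  shows "Phi n (simple_refl i) = restrict (rho n i) (Vn n)"
proof
  fix f
  show "Phi n (simple_refl i) f = restrict (rho n i) (Vn n) f"
  proof (cases "f \<in> Vn n")
    case False then show ?thesis by (simp add: Phi_def)
  next
    case True
    have invs: "inv' (simple_refl i) = simple_refl i" by (simp add: simple_refl_def)
    show ?thesis
    proof
      fix u
      show "Phi n (simple_refl i) f u = restrict (rho n i) (Vn n) f u"
      proof (cases "u \<in> involutions n")
        case False then show ?thesis using True by (simp add: Phi_apply rho_def)
      next
        case uI: True
        have wI: "simple_refl i \<circ> u \<circ> simple_refl i \<in> involutions n"
          using conj_invol[OF sr_permutes[OF i] uI] invs by simp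
        show ?thesis using True uI
          by (simp add: Phi_apply rho_def invs psign_sr[OF wI i] sign_sw_eq[OF wI i] Let_def)
      qed
    qed
  qed
qed



lemma GLV_mult: "A \<otimes>\<^bsub>GLV n\<^esub> B = restrict (A \<circ> B) (Vn n)"
  by (simp add: GLV_def)

lemma GLV_carrier: "A \<in> carrier (GLV n) \<longleftrightarrow> A \<in> extensional (Vn n) \<and> bij_betw A (Vn n) (Vn n) \<and> linear_on_Vn n A"
  by (simp add: GLV_def)

lemma Phi_ext: "Phi n p \<in> extensional (Vn n)"
  by (simp add: Phi_def)

lemma Phi_hom_eq:
  assumes p: "p permutes {1..n}" and q: "q permutes {1..n}"
  shows "Phi n (p \<circ> q) = restrict (Phi n p \<circ> Phi n q) (Vn n)"
proof
  fix f show "Phi n (p \<circ> q) f = restrict (Phi n p \<circ> Phi n q) (Vn n) f"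
  proof (cases "f \<in> Vn n")
    case True then show ?thesis using Phi_comp[OF p q True] by simp
  qed (simp add: Phi_def)
qed

lemma Phi_id_restrict: "Phi n id = restrict id (Vn n)"
proof
  fix f show "Phi n id f = restrict id (Vn n) f"
    by (cases "f \<in> Vn n") (simp_all add: Phi_id, simp add: Phi_def)
qed

lemma Phi_carrier:
  assumes p: "p permutes {1..n}"
  shows "Phi n p \<in> carrier (GLV n)"
proof -
  have pi: "inv' p permutes {1..n}" using p by (rule permutes_inv)
  have bij: "bij_betw (Phi n p) (Vn n) (Vn n)"
  proof (rule bij_betwI[where g = "Phi n (inv' p)"])
    show "Phi n p \<in> Vn n \<rightarrow> Vn n" using Phi_Vn by blast
    show "Phi n (inv' p) \<in> Vn n \<rightarrow> Vn n" using Phi_Vn by blast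
    fix f assume f: "f \<in> Vn n"
    show "Phi n (inv' p) (Phi n p f) = f"
      using Phi_comp[OF pi p f, symmetric] Phi_id[OF f] by (simp add: permutes_inv_o[OF p])
  next
    fix f assume f: "f \<in> Vn n"
    show "Phi n p (Phi n (inv' p) f) = f"
      using Phi_comp[OF p pi f, symmetric] Phi_id[OF f] by (simp add: permutes_inv_o[OF p])
  qed
  have lin: "linear_on_Vn n (Phi n p)"
    unfolding linear_on_Vn_def
  proof (intro ballI allI)
    fix f g :: "(nat \<Rightarrow> nat) \<Rightarrow> rat" and a b :: rat
    assume f: "f \<in> Vn n" and g: "g \<in> Vn n"
    have fg: "(\<lambda>w. a * f w + b * g w) \<in> Vn n" using f g by (simp add: Vn_def)
    show "Phi n p (\<lambda>w. a * f w + b * g w) = (\<lambda>w. a * Phi n p f w + b * Phi n p g w)"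
      by (rule ext) (simp add: Phi_apply[OF fg] Phi_apply[OF f] Phi_apply[OF g] algebra_simps)
  qed
  show ?thesis using Phi_ext bij lin by (simp add: GLV_carrier)
qed

lemma Phi_hom: "Phi n \<in> hom (sym_group n) (GLV n)"
proof (rule homI)
  fix x assume "x \<in> carrier (sym_group n)"
  then show "Phi n x \<in> carrier (GLV n)" by (simp add: sym_group_carrier Phi_carrier)
next
  fix x y assume "x \<in> carrier (sym_group n)" "y \<in> carrier (sym_group n)"
  then show "Phi n (x \<otimes>\<^bsub>sym_group n\<^esub> y) = Phi n x \<otimes>\<^bsub>GLV n\<^esub> Phi n y"
    by (simp add: sym_group_carrier sym_group_mult GLV_mult Phi_hom_eq)
qed

lemma GLV_idem:
  assumes A: "A \<in> carrier (GLV n)" and e: "A = restrict (A \<circ> A) (Vn n)"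
  shows "A = restrict id (Vn n)"
proof
  fix f
  have ext: "A \<in> extensional (Vn n)" and bij: "bij_betw A (Vn n) (Vn n)" using A by (simp_all add: GLV_carrier)
  show "A f = restrict id (Vn n) f"
  proof (cases "f \<in> Vn n")
    case False then show ?thesis using ext by (simp add: extensional_def)
  next
    case True
    have Af: "A f \<in> Vn n" using bij True by (simp add: bij_betw_def image_iff, blast)
    have "A (A f) = A f" using fun_cong[OF e, of f] True by simp
    then have "A f = f" using bij True Af by (simp add: bij_betw_def inj_on_def)
    then show ?thesis using True by simp
  qed
qed

lemma transpose_step:
  assumes "a < b"
  shows "Transposition.transpose a (Suc b) = simple_refl b \<circ> Transposition.transpose a b \<circ> simple_refl b"
  using assms by (auto simp: fun_eq_iff Transposition.transpose_def sr_apply)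

theorem theorem1p1:
  fixes n :: nat
  assumes "n \<ge> 1"
  shows "\<exists>\<phi> \<in> hom (sym_group n) (GLV n).
           (\<forall>i \<in> {1..<n}. \<phi> (simple_refl i) = restrict (rho n i) (Vn n)) \<and>
           (\<forall>\<psi> \<in> hom (sym_group n) (GLV n).
              (\<forall>i \<in> {1..<n}. \<psi> (simple_refl i) = restrict (rho n i) (Vn n)) \<longrightarrow>
              (\<forall>\<sigma> \<in> carrier (sym_group n). \<psi> \<sigma> = \<phi> \<sigma>))"
proof (intro bexI[of _ "Phi n"] conjI ballI impI)
  show "Phi n \<in> hom (sym_group n) (GLV n)" by (rule Phi_hom)
  fix i assume "i \<in> {1..<n}"
  then show "Phi n (simple_refl i) = restrict (rho n i) (Vn n)" using Phi_sr by simp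
next
  fix \<psi> \<sigma>
  assume hom: "\<psi> \<in> hom (sym_group n) (GLV n)"
    and gen: "\<forall>i \<in> {1..<n}. \<psi> (simple_refl i) = restrict (rho n i) (Vn n)"
    and \<sigma>: "\<sigma> \<in> carrier (sym_group n)"
  have hmul: "\<psi> (p \<circ> q) = restrict (\<psi> p \<circ> \<psi> q) (Vn n)"
    if "p permutes {1..n}" "q permutes {1..n}" for p q
    using hom_mult[OF hom, of p q] that by (simp add: sym_group_carrier sym_group_mult GLV_mult)
  have hcar: "\<psi> p \<in> carrier (GLV n)" if "p permutes {1..n}" for p
    using hom that sym_group_carrier[of p n] unfolding hom_def Pi_def by blast
  have comp: "\<psi> (p \<circ> q) = Phi n (p \<circ> q)"
    if "p permutes {1..n}" "q permutes {1..n}" "\<psi> p = Phi n p" "\<psi> q = Phi n q" for p q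
    using that by (simp add: hmul Phi_hom_eq)
  have sr: "\<psi> (simple_refl i) = Phi n (simple_refl i)" if "1 \<le> i" "i < n" for i
    using gen that Phi_sr[OF that] by simp
  have idp: "\<psi> id = Phi n id"
  proof -
    have "\<psi> id = restrict (\<psi> id \<circ> \<psi> id) (Vn n)"
      using hmul[OF permutes_id permutes_id] by (simp only: id_comp)
    then have "\<psi> id = restrict id (Vn n)" by (rule GLV_idem[OF hcar[OF permutes_id]])
    then show ?thesis by (simp add: Phi_id_restrict)
  qed
  have tr: "\<psi> (Transposition.transpose a (a + Suc k)) = Phi n (Transposition.transpose a (a + Suc k))"
    if "1 \<le> a" "a + Suc k \<le> n" for a k
    using that
  proof (induction k)
    case 0
    then show ?case using sr[of a] by (simp add: simple_refl_def)
  next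
    case (Suc k)
    let ?b = "a + Suc k"
    have IH: "\<psi> (Transposition.transpose a ?b) = Phi n (Transposition.transpose a ?b)"
      using Suc by simp
    have tp: "Transposition.transpose a ?b permutes {1..n}" using Suc.prems by (intro permutes_swap_id) auto
    have sp: "simple_refl ?b permutes {1..n}" using Suc.prems by (intro sr_permutes) auto
    have s: "\<psi> (simple_refl ?b) = Phi n (simple_refl ?b)" using Suc.prems by (intro sr) auto
    have eq: "Transposition.transpose a (a + Suc (Suc k)) = simple_refl ?b \<circ> Transposition.transpose a ?b \<circ> simple_refl ?b"
      using transpose_step[of a ?b] by simp
    have c1: "\<psi> (simple_refl ?b \<circ> Transposition.transpose a ?b) = Phi n (simple_refl ?b \<circ> Transposition.transpose a ?b)"
      by (rule comp[OF sp tp s IH])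
    show ?case unfolding eq
      by (rule comp[OF permutes_compose[OF tp sp] sp c1 s])
  qed
  have tr2: "\<psi> (Transposition.transpose a b) = Phi n (Transposition.transpose a b)"
    if "a \<in> {1..n}" "b \<in> {1..n}" "a \<noteq> b" for a b
  proof (cases "a < b")
    case True
    then obtain k where k: "b = Suc (a + k)" using less_imp_Suc_add by blast
    have "1 \<le> a" "a + Suc k \<le> n" using that k by auto
    from tr[OF this] show ?thesis using k by simp
  next
    case False
    then have "b < a" using that(3) by simp
    then obtain k where k: "a = Suc (b + k)" using less_imp_Suc_add by blast
    have "1 \<le> b" "b + Suc k \<le> n" using that k by auto
    from tr[OF this] show ?thesis using k by (simp add: transpose_commute)
  qed
  have "\<sigma> permutes {1..n}" using \<sigma> by (simp add: sym_group_carrier)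
  from this finite_atLeastAtMost show "\<psi> \<sigma> = Phi n \<sigma>"
  proof (induction rule: permutes_induct)
    case id then show ?case by (rule idp)
  next
    case (swap a b p)
    have t: "\<psi> (Transposition.transpose a b) = Phi n (Transposition.transpose a b)"
      by (rule tr2[OF swap(1) swap(2) swap(3)])
    show ?case by (rule comp[OF permutes_swap_id[OF swap(1) swap(2)] swap(4) t swap(5)])
  qed
qed

end
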